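(* Let $D\subset\mathbb{C}$ be a domain, let $h$ be holomorphic on $D$ with $h'$ nowhere zero, and put $g(w)=1/h'(w)$, $w=x+iy$. Let $\varphi(x,y)=\operatorname{Re} h(w)$ and $\psi(x,y)=\frac{\operatorname{Re} g'(w)}{|g(w)|^2}$. Then $\psi$ depends only on $\varphi$ (i.e. the Jacobian $\frac{\partial(\varphi,\psi)}{\partial(x,y)}$ vanishes identically on $D$) if and only if $$g\,g''-(g')^2=c$$ on $D$ for some real constant $c$. *)

theory Defs
  imports "HOL-Complex_Analysis.Complex_Analysis"
begin

definition jacobian2 :: "(real \<Rightarrow> real \<Rightarrow> real) \<Rightarrow> (real \<Rightarrow> real \<Rightarrow> real) \<Rightarrow> real \<Rightarrow> real \<Rightarrow> real" where
  "jacobian2 f1 f2 x y =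
     deriv (\<lambda>s. f1 s y) x * deriv (\<lambda>t. f2 x t) y
   - deriv (\<lambda>t. f1 x t) y * deriv (\<lambda>s. f2 s y) x"

end

theory Submission
  imports Defs
begin

lemma partial_x:
  assumes "(F has_field_derivative F') (at (Complex x y))"
  shows "((\<lambda>s. F (Complex s y)) has_vector_derivative F') (at x)"
proof -
  have 1: "((\<lambda>s. complex_of_real s + \<i> * complex_of_real y) has_vector_derivative 1) (at x)"
    by (auto intro!: derivative_eq_intros)
  have 2: "(F has_field_derivative F') (at (complex_of_real x + \<i> * complex_of_real y))"
    using assms by (simp add: Complex_eq)
  show ?thesis using field_vector_diff_chain_at[OF 1 2] by (simp add: o_def Complex_eq)
qed
lemma partial_y:
  assumes "(F has_field_derivative F') (at (Complex x y))"
  shows "((\<lambda>t. F (Complex x t)) has_vector_derivative (\<i> * F')) (at y)"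
proof -
  have 1: "((\<lambda>t. complex_of_real x + \<i> * complex_of_real t) has_vector_derivative \<i>) (at y)"
    by (auto intro!: derivative_eq_intros)
  have 2: "(F has_field_derivative F') (at (complex_of_real x + \<i> * complex_of_real y))"
    using assms by (simp add: Complex_eq)
  show ?thesis using field_vector_diff_chain_at[OF 1 2] by (simp add: o_def Complex_eq)
qed
lemma vd_Re:
  assumes "(f has_vector_derivative f') (at x)"
  shows "((\<lambda>s. Re (f s)) has_real_derivative Re f') (at x)"
  using bounded_linear.has_vector_derivative[OF bounded_linear_Re assms]
  by (simp add: has_real_derivative_iff_has_vector_derivative)
lemma vd_Im:
  assumes "(f has_vector_derivative f') (at x)"
  shows "((\<lambda>s. Im (f s)) has_real_derivative Im f') (at x)"
  using bounded_linear.has_vector_derivative[OF bounded_linear_Im assms]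
  by (simp add: has_real_derivative_iff_has_vector_derivative)
lemma pointwise:
  fixes h g G1 G2 :: "complex \<Rightarrow> complex"
  assumes w: "w = Complex x y"
    and dh: "(h has_field_derivative inverse (g w)) (at w)"
    and dg: "(g has_field_derivative G1 w) (at w)"
    and dG1: "(G1 has_field_derivative G2 w) (at w)"
    and g0: "g w \<noteq> 0"
  shows "jacobian2 (\<lambda>x y. Re (h (Complex x y)))
     (\<lambda>x y. Re (G1 (Complex x y)) / (cmod (g (Complex x y)))\<^sup>2) x y
    = - Im (g w * G2 w - (G1 w)\<^sup>2) / (cmod (g w))^4"
proof -
  define gP where "gP = Re (g w)"
  define gQ where "gQ = Im (g w)"
  define gU where "gU = Re (G1 w)"
  define gV where "gV = Im (G1 w)"
  define gR where "gR = Re (G2 w)"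
  define gS where "gS = Im (G2 w)"
  have N: "gP^2 + gQ^2 \<noteq> 0" using g0 by (simp add: gP_def gQ_def complex_eq_iff)
  have hx: "((\<lambda>s. Re (h (Complex s y))) has_real_derivative Re (inverse (g w))) (at x)"
    using vd_Re[OF partial_x[OF dh[unfolded w]]] w by simp
  have hy: "((\<lambda>t. Re (h (Complex x t))) has_real_derivative Re (\<i> * inverse (g w))) (at y)"
    using vd_Re[OF partial_y[OF dh[unfolded w]]] w by simp
  have gxR: "((\<lambda>s. Re (g (Complex s y))) has_real_derivative gU) (at x)"
    using vd_Re[OF partial_x[OF dg[unfolded w]]] w by (simp add: gU_def)
  have gxI: "((\<lambda>s. Im (g (Complex s y))) has_real_derivative gV) (at x)"
    using vd_Im[OF partial_x[OF dg[unfolded w]]] w by (simp add: gV_def)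
  have GxR: "((\<lambda>s. Re (G1 (Complex s y))) has_real_derivative gR) (at x)"
    using vd_Re[OF partial_x[OF dG1[unfolded w]]] w by (simp add: gR_def)
  have gyR: "((\<lambda>t. Re (g (Complex x t))) has_real_derivative -gV) (at y)"
    using vd_Re[OF partial_y[OF dg[unfolded w]]] w by (simp add: gV_def)
  have gyI: "((\<lambda>t. Im (g (Complex x t))) has_real_derivative gU) (at y)"
    using vd_Im[OF partial_y[OF dg[unfolded w]]] w by (simp add: gU_def)
  have GyR: "((\<lambda>t. Re (G1 (Complex x t))) has_real_derivative -gS) (at y)"
    using vd_Re[OF partial_y[OF dG1[unfolded w]]] w by (simp add: gS_def)
  have e1: "(\<lambda>s. Re (G1 (Complex s y)) / (cmod (g (Complex s y)))\<^sup>2)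
     = (\<lambda>s. Re (G1 (Complex s y)) / ((Re (g (Complex s y)))\<^sup>2 + (Im (g (Complex s y)))\<^sup>2))"
    by (simp add: cmod_power2)
  have e2: "(\<lambda>t. Re (G1 (Complex x t)) / (cmod (g (Complex x t)))\<^sup>2)
     = (\<lambda>t. Re (G1 (Complex x t)) / ((Re (g (Complex x t)))\<^sup>2 + (Im (g (Complex x t)))\<^sup>2))"
    by (simp add: cmod_power2)
  have px: "Re (g (Complex x y)) = gP" "Im (g (Complex x y)) = gQ" "Re (G1 (Complex x y)) = gU"
    using w by (simp_all add: gP_def gQ_def gU_def)
  have psx: "((\<lambda>s. Re (G1 (Complex s y)) / (cmod (g (Complex s y)))\<^sup>2) has_real_derivative
      (gR * (gP^2+gQ^2) - gU * (2*gP*gU + 2*gQ*gV)) / (gP^2+gQ^2)^2) (at x)"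
  proof -
    have den: "((\<lambda>s. (Re (g (Complex s y)))\<^sup>2 + (Im (g (Complex s y)))\<^sup>2) has_real_derivative (2*gP*gU + 2*gQ*gV)) (at x)"
      using DERIV_add[OF DERIV_power[OF gxR, of 2] DERIV_power[OF gxI, of 2]] by (simp add: px algebra_simps)
    show ?thesis unfolding e1
      apply (rule DERIV_cong[OF DERIV_divide[OF GxR den]])
      using N by (simp_all add: px power2_eq_square)
  qed
  have psy: "((\<lambda>t. Re (G1 (Complex x t)) / (cmod (g (Complex x t)))\<^sup>2) has_real_derivative
      (-gS * (gP^2+gQ^2) - gU * (2*gP*(-gV) + 2*gQ*gU)) / (gP^2+gQ^2)^2) (at y)"
  proof -
    have den: "((\<lambda>t. (Re (g (Complex x t)))\<^sup>2 + (Im (g (Complex x t)))\<^sup>2) has_real_derivative (2*gP*(-gV) + 2*gQ*gU)) (at y)"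
      using DERIV_add[OF DERIV_power[OF gyR, of 2] DERIV_power[OF gyI, of 2]] by (simp add: px algebra_simps)
    show ?thesis unfolding e2
      apply (rule DERIV_cong[OF DERIV_divide[OF GyR den]])
      using N by (simp_all add: px power2_eq_square)
  qed
  have cm: "(cmod (g w))\<^sup>2 = gP^2+gQ^2" by (simp add: cmod_power2 gP_def gQ_def)
  have ri: "Re (inverse (g w)) = gP/(gP^2+gQ^2)" "Im (inverse (g w)) = -gQ/(gP^2+gQ^2)"
    by (simp_all add: gP_def gQ_def power2_eq_square)
  define NN where "NN = gP^2 + gQ^2"
  have NN0: "NN \<noteq> 0" using N by (simp add: NN_def)
  have ri2: "Re (\<i> * inverse (g w)) = gQ/NN" using ri by (simp add: NN_def)
  have J: "jacobian2 (\<lambda>x y. Re (h (Complex x y)))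
     (\<lambda>x y. Re (G1 (Complex x y)) / (cmod (g (Complex x y)))\<^sup>2) x y
     = (gP/NN) * ((-gS * NN - gU * (2*gP*(-gV) + 2*gQ*gU)) / NN^2)
       - (gQ/NN) * ((gR * NN - gU * (2*gP*gU + 2*gQ*gV)) / NN^2)"
    unfolding jacobian2_def
    by (simp add: DERIV_imp_deriv[OF hx] DERIV_imp_deriv[OF hy] DERIV_imp_deriv[OF psx] DERIV_imp_deriv[OF psy] ri ri2 NN_def gP_def[symmetric] gQ_def[symmetric])
  also have "\<dots> = (-NN*(gP*gS+gQ*gR) + 2*gU*gV*(gP^2+gQ^2))/NN^3"
    using NN0 by (simp add: field_simps power2_eq_square power3_eq_cube)
  also have "\<dots> = (-NN*(gP*gS+gQ*gR) + 2*gU*gV*NN)/NN^3" by (simp add: NN_def)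
  also have "\<dots> = - (gP*gS+gQ*gR - 2*gU*gV)/NN^2"
    using NN0 by (simp add: field_simps power2_eq_square power3_eq_cube)
  also have "\<dots> = - (gP*gS+gQ*gR - 2*gU*gV)/(cmod (g w))^4"
  proof -
    have "(cmod (g w))^4 = ((cmod (g w))^2)^2" by simp
    then show ?thesis by (simp add: cm NN_def)
  qed
  also have "\<dots> = - Im (g w * G2 w - (G1 w)\<^sup>2) / (cmod (g w))^4"
    by (simp add: gP_def gQ_def gU_def gV_def gR_def gS_def power2_eq_square algebra_simps)
  finally show ?thesis .
qed
lemma im_zero_const:
  assumes hol: "K holomorphic_on D" and "open D" "connected D"
    and im: "\<forall>w\<in>D. Im (K w) = 0"
  shows "\<exists>c::real. \<forall>w\<in>D. K w = complex_of_real c"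
proof (cases "D = {}")
  case True then show ?thesis by auto
next
  case False
  then obtain w0 where w0: "w0 \<in> D" by auto
  have "K constant_on D"
  proof (rule ccontr)
    assume nc: "\<not> K constant_on D"
    have "open (K ` D)" using open_mapping_thm[OF hol assms(2,3) assms(2) order_refl nc] .
    then obtain e where e: "e > 0" "ball (K w0) e \<subseteq> K ` D"
      using w0 by (meson imageI open_contains_ball)
    have "K w0 + \<i> * of_real (e/2) \<in> ball (K w0) e"
      using e by (simp add: dist_norm norm_mult)
    then obtain w1 where "w1 \<in> D" "K w1 = K w0 + \<i> * of_real (e/2)" using e by auto
    then have "Im (K w1) = e/2" using im w0 by simp
    with im \<open>w1 \<in> D\<close> e show False by simp
  qed
  then obtain c where c: "\<forall>w\<in>D. K w = c" by (auto simp: constant_on_def)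
  have "Im c = 0" using c im w0 by metis
  then have "c = complex_of_real (Re c)" by (simp add: complex_eq_iff)
  with c show ?thesis by metis
qed

theorem lemma2:
  fixes D :: "complex set" and h :: "complex \<Rightarrow> complex"
  assumes "open D" and "connected D"
    and "h holomorphic_on D"
    and "\<forall>w\<in>D. deriv h w \<noteq> 0"
  defines "g \<equiv> (\<lambda>w. 1 / deriv h w)"
  defines "\<phi> \<equiv> (\<lambda>x y. Re (h (Complex x y)))"
  defines "\<psi> \<equiv> (\<lambda>x y. Re (deriv g (Complex x y)) / (cmod (g (Complex x y)))\<^sup>2)"
  shows "(\<forall>x y. Complex x y \<in> D \<longrightarrow> jacobian2 \<phi> \<psi> x y = 0) \<longleftrightarrow>
         (\<exists>c::real. \<forall>w\<in>D. g w * deriv (deriv g) w - (deriv g w)\<^sup>2 = complex_of_real c)"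
proof -
  have hh: "deriv h holomorphic_on D" using holomorphic_deriv[OF assms(3,1)] .
  have gh: "g holomorphic_on D" unfolding g_def using hh assms(4)
    by (auto intro!: holomorphic_intros)
  have g1h: "deriv g holomorphic_on D" using holomorphic_deriv[OF gh assms(1)] .
  have g2h: "deriv (deriv g) holomorphic_on D" using holomorphic_deriv[OF g1h assms(1)] .
  define K where "K = (\<lambda>w. g w * deriv (deriv g) w - (deriv g w)\<^sup>2)"
  have Kh: "K holomorphic_on D" unfolding K_def using gh g1h g2h
    by (auto intro!: holomorphic_intros)
  have g0: "g w \<noteq> 0" if "w \<in> D" for w using assms(4) that by (simp add: g_def)
  have jac: "jacobian2 \<phi> \<psi> x y = - Im (K (Complex x y)) / (cmod (g (Complex x y)))^4"
    if "Complex x y \<in> D" for x y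
    unfolding \<phi>_def \<psi>_def K_def
  proof (rule pointwise[OF refl])
    have "inverse (g (Complex x y)) = deriv h (Complex x y)" by (simp add: g_def)
    then show "(h has_field_derivative inverse (g (Complex x y))) (at (Complex x y))"
      using holomorphic_derivI[OF assms(3,1) that] by simp
    show "(g has_field_derivative deriv g (Complex x y)) (at (Complex x y))"
      using holomorphic_derivI[OF gh assms(1) that] .
    show "(deriv g has_field_derivative deriv (deriv g) (Complex x y)) (at (Complex x y))"
      using holomorphic_derivI[OF g1h assms(1) that] .
    show "g (Complex x y) \<noteq> 0" using g0 that .
  qed
  have "(\<forall>x y. Complex x y \<in> D \<longrightarrow> jacobian2 \<phi> \<psi> x y = 0) \<longleftrightarrow> (\<forall>w\<in>D. Im (K w) = 0)"
  proof
    assume L: "\<forall>x y. Complex x y \<in> D \<longrightarrow> jacobian2 \<phi> \<psi> x y = 0"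
    show "\<forall>w\<in>D. Im (K w) = 0"
    proof
      fix w assume w: "w \<in> D"
      have wc: "Complex (Re w) (Im w) \<in> D" using w by simp
      have "- Im (K w) / (cmod (g w))^4 = 0" using L[rule_format, OF wc] jac[OF wc] by simp
      then show "Im (K w) = 0" using g0[OF w] by simp
    qed
  next
    assume R: "\<forall>w\<in>D. Im (K w) = 0"
    show "\<forall>x y. Complex x y \<in> D \<longrightarrow> jacobian2 \<phi> \<psi> x y = 0"
      using R jac by simp
  qed
  also have "\<dots> \<longleftrightarrow> (\<exists>c::real. \<forall>w\<in>D. K w = complex_of_real c)"
    using im_zero_const[OF Kh assms(1,2)] by auto
  finally show ?thesis unfolding K_def .
qed
end
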